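(* In the setting below, the sequence $n\mapsto f(\hat x_n)$ is stationary, i.e. constant from some index on.
   Context: Let $x_1,\dots,x_N\in\mathbb{R}^q$ and let $d:\mathbb{R}^q\times\mathbb{R}^q\to\mathbb{R}_{\ge0}$ be a function such that for every $J\subseteq\{1,\dots,N\}$, $x\mapsto\sum_{i\in J}d(x,x_i)$ attains its minimum. Let $\mu$ be a choice function with $\mu(J)\in\operatorname{argmin}_x\sum_{i\in J}d(x,x_i)$ for each $J$. Let $\hat x_0\in\mathbb{R}^q$ and define $C_n=\{i: d(\hat x_n,x_i)<1\}$, $\hat x_{n+1}=\mu(C_n)$. Let $f(x)=\sum_{i=1}^N\max(1-d(x,x_i),0)$. *)

theory Defs
  imports "HOL-Analysis.Analysis"
begin

end

theory Submission
  imports Defs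
begin

lemma eventually_const_finite:
  fixes a :: "nat \<Rightarrow> real"
  assumes mono: "\<And>n. a n \<le> a (Suc n)" and fin: "finite (range a)"
  shows "\<exists>n0. \<forall>n\<ge>n0. a n = Max (range a)"
proof -
  have "Max (range a) \<in> range a" using fin by (intro Max_in) auto
  then obtain n0 where n0: "a n0 = Max (range a)" by auto
  have inc: "incseq a" using mono by (simp add: incseq_SucI)
  show ?thesis
  proof (intro exI allI impI)
    fix n assume "n \<ge> n0"
    then have "a n0 \<le> a n" using inc by (simp add: incseq_def)
    moreover have "a n \<le> Max (range a)" using fin by (intro Max_ge) auto
    ultimately show "a n = Max (range a)" using n0 by linarith
  qed
qed

theorem proposition2:
  fixes N :: nat
    and x :: "nat \<Rightarrow> real ^ 'q"
    and d :: "real ^ 'q \<Rightarrow> real ^ 'q \<Rightarrow> real"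
    and \<mu> :: "nat set \<Rightarrow> real ^ 'q"
    and xh :: "nat \<Rightarrow> real ^ 'q"
  assumes d_nonneg: "\<And>a b. d a b \<ge> 0"
    and min_exists: "\<And>J. J \<subseteq> {1..N} \<Longrightarrow>
           \<exists>y. \<forall>z. (\<Sum>i\<in>J. d y (x i)) \<le> (\<Sum>i\<in>J. d z (x i))"
    and mu_min: "\<And>J z. J \<subseteq> {1..N} \<Longrightarrow>
           (\<Sum>i\<in>J. d (\<mu> J) (x i)) \<le> (\<Sum>i\<in>J. d z (x i))"
    and step: "\<And>n. xh (Suc n) = \<mu> {i \<in> {1..N}. d (xh n) (x i) < 1}"
  shows "\<exists>n0. \<forall>n\<ge>n0.
           (\<Sum>i=1..N. max (1 - d (xh n) (x i)) 0) = (\<Sum>i=1..N. max (1 - d (xh n0) (x i)) 0)"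
proof -
  define F where "F y = (\<Sum>i=1..N. max (1 - d y (x i)) 0)" for y
  define C where "C y = {i \<in> {1..N}. d y (x i) < 1}" for y
  define G where "G J = (\<Sum>i\<in>J. (1 - d (\<mu> J) (x i)))" for J
  have L1: "F y = (\<Sum>i\<in>C y. (1 - d y (x i)))" for y
  proof -
    have "(\<Sum>i\<in>C y. (1 - d y (x i))) = (\<Sum>i=1..N. if d y (x i) < 1 then 1 - d y (x i) else 0)"
      unfolding C_def by (rule sum.inter_filter) simp
    also have "\<dots> = F y" unfolding F_def by (intro sum.cong) auto
    finally show ?thesis by simp
  qed
  have L2: "(\<Sum>i\<in>J. (1 - d z (x i))) \<le> F z" if "J \<subseteq> {1..N}" for J z
  proof -
    have "(\<Sum>i\<in>J. (1 - d z (x i))) \<le> (\<Sum>i\<in>J. max (1 - d z (x i)) 0)"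
      by (intro sum_mono) auto
    also have "\<dots> \<le> F z" unfolding F_def
      using that by (intro sum_mono2) auto
    finally show ?thesis .
  qed
  have CS: "C y \<subseteq> {1..N}" for y unfolding C_def by auto
  have A: "F (xh n) \<le> G (C (xh n))" for n
  proof -
    have "(\<Sum>i\<in>C (xh n). d (\<mu> (C (xh n))) (x i)) \<le> (\<Sum>i\<in>C (xh n). d (xh n) (x i))"
      using mu_min[OF CS] .
    then show ?thesis unfolding L1 G_def by (simp add: sum_subtractf)
  qed
  have B: "G (C (xh n)) \<le> F (xh (Suc n))" for n
    unfolding G_def using L2[OF CS] step C_def by metis
  define a where "a n = G (C (xh n))" for n
  have mono: "a n \<le> a (Suc n)" for n unfolding a_def using A[of "Suc n"] B[of n] by linarith
  have "range a \<subseteq> G ` Pow {1..N}" unfolding a_def using CS by auto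
  then have fin: "finite (range a)" by (rule finite_subset) auto
  obtain n0 where n0: "\<forall>n\<ge>n0. a n = Max (range a)"
    using eventually_const_finite[OF mono fin] by blast
  have E: "F (xh n) = Max (range a)" if "n \<ge> Suc n0" for n
  proof -
    define m where "m = n - 1"
    have m: "n = Suc m" "m \<ge> n0" using that unfolding m_def by auto
    have "a m \<le> F (xh n)" "F (xh n) \<le> a n" using A[of n] B[of m] m unfolding a_def by auto
    moreover have "a m = Max (range a)" "a n = Max (range a)" using n0 m by auto
    ultimately show ?thesis by linarith
  qed
  show ?thesis
    by (rule exI[of _ "Suc n0"]) (use E in \<open>auto simp: F_def\<close>)
qed

end
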